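(* Let $F$ be the elementary cellular automaton with rule number 184. Then $D(\textsc{Pred}_{F,n})=\Theta(\log n)$: there is a protocol using $O(\log n)$ bits, and no protocol uses asymptotically fewer.
   Context: An elementary cellular automaton (ECA) with rule number $N\in\{0,\dots,255\}$ is the map $F:\{0,1\}^{\mathbb Z}\to\{0,1\}^{\mathbb Z}$ given by $F(x)_i=f(x_{i-1},x_i,x_{i+1})$. Here the local rule $f:\{0,1\}^3\to\{0,1\}$ is determined by $N=\sum_{a,b,c\in\{0,1\}}2^{4a+2b+c}f(a,b,c)$. On a finite word of length $m\ge 3$, $F$ produces the word of length $m-2$ obtained by applying $f$ at every position whose full neighbourhood lies in the word. For $n\ge1$, $\textsc{Pred}_{F,n}:\{0,1\}^{2n+1}\to\{0,1\}$ maps a word $x=x_{-n}\cdots x_n$ to the single letter of $F^n(x)$, i.e. the state of the central cell after $n$ steps. For a function $g:X\times Y\to Z$, $D(g)$ is the minimal depth of a deterministic two-party protocol computing $g$. In such a protocol, Alice knows $x$ and Bob knows $y$. The protocol is a binary tree: each internal node is labelled by a function of Alice's input only or of Bob's input only, with values in $\{\text{left},\text{right}\}$, and each leaf is labelled by an output value. For $g:\{0,1\}^m\to Z$, set $D(g)=\max_{0\le i<m}D(g_i)$, where $g_i:\{0,1\}^i\times\{0,1\}^{m-i}\to Z$ is $g_i(x,y)=g(xy)$. *)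

theory Defs
  imports Complex_Main "HOL-Library.Landau_Symbols"
begin

text \<open>Words over {0,1} are represented as lists of booleans (True = 1).
  Local rule of ECA number N: f(a,b,c) is bit number 4a+2b+c of N.\<close>

definition eca_local :: "nat \<Rightarrow> bool \<Rightarrow> bool \<Rightarrow> bool \<Rightarrow> bool" where
  "eca_local N a b c = odd (N div 2 ^ (4 * of_bool a + 2 * of_bool b + of_bool c))"

definition eca_step :: "nat \<Rightarrow> bool list \<Rightarrow> bool list" where
  "eca_step N w = map (\<lambda>i. eca_local N (w ! i) (w ! (i+1)) (w ! (i+2))) [0..<length w - 2]"

text \<open>Pred_{F,n}: on a word of length 2n+1, the single letter of F^n(x).\<close>

definition pred_eca :: "nat \<Rightarrow> nat \<Rightarrow> bool list \<Rightarrow> bool" where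
  "pred_eca N n w = hd ((eca_step N ^^ n) w)"

datatype ('x, 'y, 'z) protocol =
    Leaf 'z
  | NodeA "'x \<Rightarrow> bool" "('x, 'y, 'z) protocol" "('x, 'y, 'z) protocol"
  | NodeB "'y \<Rightarrow> bool" "('x, 'y, 'z) protocol" "('x, 'y, 'z) protocol"

fun run_protocol :: "('x, 'y, 'z) protocol \<Rightarrow> 'x \<Rightarrow> 'y \<Rightarrow> 'z" where
  "run_protocol (Leaf z) x y = z"
| "run_protocol (NodeA f l r) x y = (if f x then run_protocol r x y else run_protocol l x y)"
| "run_protocol (NodeB g l r) x y = (if g y then run_protocol r x y else run_protocol l x y)"

fun depth :: "('x, 'y, 'z) protocol \<Rightarrow> nat" where
  "depth (Leaf z) = 0"
| "depth (NodeA f l r) = Suc (max (depth l) (depth r))"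
| "depth (NodeB g l r) = Suc (max (depth l) (depth r))"

definition computes :: "('x, 'y, 'z) protocol \<Rightarrow> ('x \<Rightarrow> 'y \<Rightarrow> 'z) \<Rightarrow> 'x set \<Rightarrow> 'y set \<Rightarrow> bool" where
  "computes P g X Y \<longleftrightarrow> (\<forall>x\<in>X. \<forall>y\<in>Y. run_protocol P x y = g x y)"

definition cc :: "('x \<Rightarrow> 'y \<Rightarrow> 'z) \<Rightarrow> 'x set \<Rightarrow> 'y set \<Rightarrow> nat" where
  "cc g X Y = (LEAST d. \<exists>P :: ('x, 'y, 'z) protocol. computes P g X Y \<and> depth P = d)"

definition cc_word :: "(bool list \<Rightarrow> 'z) \<Rightarrow> nat \<Rightarrow> nat" where
  "cc_word g m = Max ((\<lambda>i. cc (\<lambda>x y. g (x @ y)) {x. length x = i} {y. length y = m - i}) ` {0..<m})"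

end

theory Submission
  imports Defs "HOL-Real_Asymp.Real_Asymp"
begin


definition G :: "bool list \<Rightarrow> nat \<Rightarrow> int" where
  "G w p = (\<Sum>j\<in>{p..<length w}. of_bool (w!j))"

lemma G_Suc: "p < length w \<Longrightarrow> G w p = of_bool (w!p) + G w (Suc p)"
  unfolding G_def by (rule sum.atLeast_Suc_lessThan)

lemma G_ge: "length w \<le> p \<Longrightarrow> G w p = 0"
  unfolding G_def by simp

lemma G_Cons_Suc: "G (a#w) (Suc p) = G w p"
  unfolding G_def by (simp only: length_Cons sum.shift_bounds_Suc_ivl nth_Cons_Suc)

lemma G_Cons_0: "G (a#w) 0 = of_bool a + G w 0"
  using G_Suc[of 0 "a#w"] by (simp add: G_Cons_Suc)

lemma G_nonneg: "G w p \<ge> 0"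
  unfolding G_def by (rule sum_nonneg) simp

lemma G_le: "G w p \<le> int (length w)"
proof -
  have "G w p \<le> (\<Sum>j\<in>{p..<length w}. 1)" unfolding G_def by (rule sum_mono) simp
  also have "\<dots> \<le> int (length w)" by simp
  finally show ?thesis .
qed

lemma G_append: "G (x @ y) p = (if p < length x then G x p + G y 0 else G y (p - length x))"
proof (induction x arbitrary: p)
  case Nil then show ?case by (simp add: G_ge)
next
  case (Cons a x)
  show ?case
  proof (cases p)
    case 0 then show ?thesis using Cons[of 0] by (simp add: G_Cons_0 G_ge)
  next
    case (Suc p') then show ?thesis using Cons[of p'] by (simp add: G_Cons_Suc)
  qed
qed

lemma local184: "eca_local 184 a b c = (if b then c else a)"
  by (cases a; cases b; cases c) (simp_all add: eca_local_def)

lemma step_len: "length (eca_step N w) = length w - 2"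
  by (simp add: eca_step_def)

lemma step_nth: "i < length w - 2 \<Longrightarrow> eca_step N w ! i = eca_local N (w!i) (w!(i+1)) (w!(i+2))"
  by (simp add: eca_step_def)

lemma iter_len: "length ((eca_step N ^^ t) w) = length w - 2*t"
  by (induction t) (simp_all add: step_len)

definition R :: "bool list \<Rightarrow> nat \<Rightarrow> int" where
  "R w q = min (G w q) (G w (q+2) + 1)"

lemma one_step_aux:
  "\<forall>q. length w - 2 - q = d \<longrightarrow> q + 2 \<le> length w \<longrightarrow>
     G (eca_step 184 w) q = R w q - R w (length w - 2)"
proof (induction d)
  case 0
  show ?case
  proof (intro allI impI)
    fix q assume "length w - 2 - q = 0" "q + 2 \<le> length w"
    then have q: "q = length w - 2" by simp
    show "G (eca_step 184 w) q = R w q - R w (length w - 2)"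
      using q by (simp add: G_ge step_len)
  qed
next
  case (Suc d)
  show ?case
  proof (intro allI impI)
    fix q assume h: "length w - 2 - q = Suc d" "q + 2 \<le> length w"
    then have q3: "q + 3 \<le> length w" by simp
    have IH: "G (eca_step 184 w) (Suc q) = R w (Suc q) - R w (length w - 2)"
      using Suc h by auto
    have e1: "G (eca_step 184 w) q = of_bool (eca_step 184 w ! q) + G (eca_step 184 w) (Suc q)"
      using q3 by (intro G_Suc) (simp add: step_len)
    have e2: "eca_step 184 w ! q = (if w!(q+1) then w!(q+2) else w!q)"
      using q3 by (simp add: step_nth local184)
    have g0: "G w q = of_bool (w!q) + G w (Suc q)" using q3 by (intro G_Suc) simp
    have g1: "G w (Suc q) = of_bool (w!(q+1)) + G w (q+2)" using q3 G_Suc[of "Suc q" w] by simp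
    have g2: "G w (q+2) = of_bool (w!(q+2)) + G w (q+3)" using q3 G_Suc[of "q+2" w] by (simp add: eval_nat_numeral)
    have "R w q - R w (Suc q) = of_bool (if w!(q+1) then w!(q+2) else w!q)"
      unfolding R_def using g0 g1 g2
      by (cases "w!q"; cases "w!(q+1)"; cases "w!(q+2)") (simp_all add: numeral_eq_Suc)
    then show "G (eca_step 184 w) q = R w q - R w (length w - 2)"
      using e1 e2 IH by simp
  qed
qed

lemma one_step: "q + 2 \<le> length w \<Longrightarrow> G (eca_step 184 w) q = R w q - R w (length w - 2)"
  using one_step_aux by blast

fun M :: "nat \<Rightarrow> bool list \<Rightarrow> nat \<Rightarrow> int" where
  "M 0 w q = G w q"
| "M (Suc t) w q = min (G w q) (M t w (q+2) + 1)"

lemma M_le_G: "M t w q \<le> G w q"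
  by (cases t) auto

lemma M_step: "q + 2*t + 2 \<le> length w \<Longrightarrow>
   M t (eca_step 184 w) q = M (Suc t) w q - R w (length w - 2)"
proof (induction t arbitrary: q)
  case 0
  then show ?case by (simp add: one_step R_def)
next
  case (Suc t)
  have a: "G (eca_step 184 w) q = R w q - R w (length w - 2)"
    using Suc.prems by (intro one_step) simp
  have b: "M t (eca_step 184 w) (q+2) = M (Suc t) w (q+2) - R w (length w - 2)"
    using Suc.prems by (intro Suc.IH) simp
  have c: "M (Suc t) w (q+2) \<le> G w (q+2)" by (rule M_le_G)
  have d: "M (Suc (Suc t)) w q = min (G w q) (M (Suc t) w (q+2) + 1)" by simp
  have e: "M (Suc t) (eca_step 184 w) q = min (G (eca_step 184 w) q) (M t (eca_step 184 w) (q+2) + 1)" by simp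
  show ?case using a b c d e unfolding R_def by linarith
qed

lemma M_iter: "q \<le> length w - 2*t \<Longrightarrow> q' \<le> length w - 2*t \<Longrightarrow>
   G ((eca_step 184 ^^ t) w) q - G ((eca_step 184 ^^ t) w) q' = M t w q - M t w q'"
proof (induction t arbitrary: w)
  case 0 then show ?case by simp
next
  case (Suc t)
  show ?case
  proof (cases "length w \<le> 2 * Suc t")
    case True
    then have "q = 0" "q' = 0" using Suc.prems by auto
    then show ?thesis by simp
  next
    case False
    have IH: "G ((eca_step 184 ^^ t) (eca_step 184 w)) q - G ((eca_step 184 ^^ t) (eca_step 184 w)) q'
       = M t (eca_step 184 w) q - M t (eca_step 184 w) q'"
      using Suc.prems False by (intro Suc.IH) (simp_all add: step_len)
    have m1: "M t (eca_step 184 w) q = M (Suc t) w q - R w (length w - 2)"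
      using Suc.prems False by (intro M_step) simp
    have m2: "M t (eca_step 184 w) q' = M (Suc t) w q' - R w (length w - 2)"
      using Suc.prems False by (intro M_step) simp
    have "(eca_step 184 ^^ Suc t) w = (eca_step 184 ^^ t) (eca_step 184 w)"
      by (simp add: funpow_Suc_right del: funpow.simps)
    then show ?thesis using IH m1 m2 by simp
  qed
qed

lemma pred_formula: "length w = 2*n+1 \<Longrightarrow> pred_eca 184 n w = (M n w 0 - M n w 1 = 1)"
proof -
  assume len: "length w = 2*n+1"
  define v where "v = (eca_step 184 ^^ n) w"
  have lv: "length v = 1" using len by (simp add: v_def iter_len)
  have "G v 0 - G v 1 = M n w 0 - M n w 1"
    unfolding v_def using len by (intro M_iter) simp_all
  moreover have "G v 0 = of_bool (v!0) + G v 1" using lv G_Suc[of 0 v] by simp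
  moreover have "hd v = v!0" using lv by (cases v) auto
  ultimately show ?thesis unfolding pred_eca_def v_def[symmetric] by auto
qed



lemma M_le: "k \<le> t \<Longrightarrow> M t w q \<le> G w (q+2*k) + int k"
proof (induction t arbitrary: q k)
  case 0 then show ?case by simp
next
  case (Suc t)
  show ?case
  proof (cases k)
    case 0 then show ?thesis using M_le_G[of "Suc t" w q] by simp
  next
    case (Suc k')
    then have "M t w (q+2) \<le> G w (q+2+2*k') + int k'" using Suc.IH[of k' "q+2"] Suc.prems by simp
    then show ?thesis using Suc by (simp add: algebra_simps)
  qed
qed

lemma M_attained: "\<exists>k\<le>t. M t w q = G w (q+2*k) + int k"
proof (induction t arbitrary: q)
  case 0 then show ?case by simp
next
  case (Suc t)
  obtain k where k: "k \<le> t" "M t w (q+2) = G w (q+2+2*k) + int k" using Suc.IH by blast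
  show ?case
  proof (cases "G w q \<le> M t w (q+2) + 1")
    case True then show ?thesis by (intro exI[of _ 0]) simp
  next
    case False then show ?thesis using k
      by (intro exI[of _ "Suc k"]) (simp add: algebra_simps)
  qed
qed

definition alpha :: "nat \<Rightarrow> nat \<Rightarrow> nat \<Rightarrow> bool list \<Rightarrow> int" where
  "alpha n i q x = Min (insert (int (4*n+4)) ((\<lambda>k. G x (q+2*k) + int k) ` {k. k \<le> n \<and> q+2*k < i}))"

definition beta :: "nat \<Rightarrow> nat \<Rightarrow> nat \<Rightarrow> bool list \<Rightarrow> int" where
  "beta n i q y = Min ((\<lambda>k. G y (q+2*k-i) + int k) ` {k. k \<le> n \<and> i \<le> q+2*k})"

lemma fin_le: "finite {k::nat. k \<le> n \<and> P k}"
  by (rule finite_subset[of _ "{..n}"]) auto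

lemma alpha_bounds: "0 \<le> alpha n i q x \<and> alpha n i q x \<le> int (4*n+4)"
proof
  have "alpha n i q x \<in> insert (int (4*n+4)) ((\<lambda>k. G x (q+2*k) + int k) ` {k. k \<le> n \<and> q+2*k < i})"
    unfolding alpha_def by (rule Min_in) (simp_all add: fin_le)
  then show "0 \<le> alpha n i q x" using G_nonneg by auto
  show "alpha n i q x \<le> int (4*n+4)" unfolding alpha_def by (rule Min_le) (simp_all add: fin_le)
qed

lemma decomp:
  assumes lx: "length x = i" and i: "i \<le> 2*n" and ly: "length y = 2*n+1-i" and q: "q \<le> 1"
  shows "M n (x@y) q = min (alpha n i q x + G y 0) (beta n i q y)"
proof (rule antisym)
  let ?A = "insert (int (4*n+4)) ((\<lambda>k. G x (q+2*k) + int k) ` {k. k \<le> n \<and> q+2*k < i})"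
  let ?B = "(\<lambda>k. G y (q+2*k-i) + int k) ` {k. k \<le> n \<and> i \<le> q+2*k}"
  have fA: "finite ?A" by (simp add: fin_le)
  have fB: "finite ?B" by (simp add: fin_le)
  have nB: "?B \<noteq> {}" using i by auto
  have lw: "length (x@y) = 2*n+1" using lx ly i by simp
  have "M n (x@y) q \<le> alpha n i q x + G y 0"
  proof -
    have "alpha n i q x \<in> ?A" unfolding alpha_def by (rule Min_in[OF fA]) simp
    then show ?thesis
    proof
      assume a: "alpha n i q x = int (4*n+4)"
      have "M n (x@y) q \<le> G (x@y) q" by (rule M_le_G)
      also have "\<dots> \<le> int (2*n+1)" using G_le[of "x@y" q] lw by simp
      finally show ?thesis using a G_nonneg[of y 0] by simp
    next
      assume "alpha n i q x \<in> (\<lambda>k. G x (q+2*k) + int k) ` {k. k \<le> n \<and> q+2*k < i}"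
      then obtain k where k: "k \<le> n" "q+2*k < i" "alpha n i q x = G x (q+2*k) + int k" by auto
      have "M n (x@y) q \<le> G (x@y) (q+2*k) + int k" using k by (intro M_le)
      then show ?thesis using k lx by (simp add: G_append)
    qed
  qed
  moreover have "M n (x@y) q \<le> beta n i q y"
  proof -
    have "beta n i q y \<in> ?B" unfolding beta_def by (rule Min_in[OF fB nB])
    then obtain k where k: "k \<le> n" "i \<le> q+2*k" "beta n i q y = G y (q+2*k-i) + int k" by auto
    have "M n (x@y) q \<le> G (x@y) (q+2*k) + int k" using k by (intro M_le)
    then show ?thesis using k lx by (simp add: G_append)
  qed
  ultimately show "M n (x@y) q \<le> min (alpha n i q x + G y 0) (beta n i q y)" by simp
next
  let ?A = "insert (int (4*n+4)) ((\<lambda>k. G x (q+2*k) + int k) ` {k. k \<le> n \<and> q+2*k < i})"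
  let ?B = "(\<lambda>k. G y (q+2*k-i) + int k) ` {k. k \<le> n \<and> i \<le> q+2*k}"
  have fA: "finite ?A" by (simp add: fin_le)
  have fB: "finite ?B" by (simp add: fin_le)
  obtain k where k: "k \<le> n" "M n (x@y) q = G (x@y) (q+2*k) + int k" using M_attained by blast
  show "min (alpha n i q x + G y 0) (beta n i q y) \<le> M n (x@y) q"
  proof (cases "q+2*k < i")
    case True
    have "alpha n i q x \<le> G x (q+2*k) + int k" unfolding alpha_def
      by (rule Min_le[OF fA]) (use True k in auto)
    then show ?thesis using k True lx by (simp add: G_append)
  next
    case False
    have "beta n i q y \<le> G y (q+2*k-i) + int k" unfolding beta_def
      by (rule Min_le[OF fB]) (use False k in auto)
    then show ?thesis using k False lx by (simp add: G_append)
  qed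
qed

fun tree :: "('x \<Rightarrow> nat) \<Rightarrow> (nat \<Rightarrow> 'y \<Rightarrow> bool) \<Rightarrow> nat \<Rightarrow> nat \<Rightarrow> ('x, 'y, bool) protocol" where
  "tree e h 0 u = NodeB (h u) (Leaf False) (Leaf True)"
| "tree e h (Suc j) u = NodeA (\<lambda>x. odd (e x div 2^j)) (tree e h j (2*u)) (tree e h j (2*u+1))"

lemma tree_depth: "depth (tree e h j u) = Suc j"
  by (induction j arbitrary: u) auto

lemma tree_run: "e x div 2^j = u \<Longrightarrow> run_protocol (tree e h j u) x y = h (e x) y"
proof (induction j arbitrary: u)
  case 0 then show ?case by simp
next
  case (Suc j)
  have d: "e x div 2^j div 2 = u" using Suc.prems by (metis div_mult2_eq power_Suc2)
  show ?case
  proof (cases "odd (e x div 2^j)")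
    case True
    then have "e x div 2^j = 2*u+1" using d by (metis odd_two_times_div_two_succ)
    then show ?thesis using Suc.IH True by simp
  next
    case False
    then have "e x div 2^j = 2*u" using d by (metis even_two_times_div_two)
    then show ?thesis using Suc.IH False by simp
  qed
qed

lemma cc_le_tree:
  fixes e :: "'x \<Rightarrow> nat" and h :: "nat \<Rightarrow> 'y \<Rightarrow> bool" and g :: "'x \<Rightarrow> 'y \<Rightarrow> bool"
  assumes "\<forall>x\<in>X. e x < 2^k" "\<forall>x\<in>X. \<forall>y\<in>Y. g x y = h (e x) y"
  shows "cc g X Y \<le> Suc k \<and> (\<exists>P. computes P g X Y)"
proof -
  have c: "computes (tree e h k 0) g X Y"
    unfolding computes_def using assms by (auto simp: tree_run)
  have "cc g X Y \<le> Suc k"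
    unfolding cc_def by (rule Least_le) (use c tree_depth in blast)
  then show ?thesis using c by blast
qed

lemma divmod_aux: "b < c \<Longrightarrow> (a*c+b) div c = (a::nat) \<and> (a*c+b) mod c = b"
  by simp

definition Kb :: "nat \<Rightarrow> nat" where
  "Kb n = nat \<lceil>log 2 (real (4*n+5))\<rceil>"

lemma Kb_bound: "4*n+5 \<le> 2 ^ Kb n"
proof -
  have "real (4*n+5) = 2 powr (log 2 (real (4*n+5)))" by simp
  also have "\<dots> \<le> 2 powr (real (Kb n))" unfolding Kb_def
    by (rule powr_mono) auto
  also have "\<dots> = real (2 ^ Kb n)" by (simp add: powr_realpow)
  finally show ?thesis by linarith
qed

lemma cc_split_upper:
  assumes i: "i < 2*n+1"
  shows "cc (\<lambda>x y. pred_eca 184 n (x@y)) {x. length x = i} {y. length y = 2*n+1-i} \<le> Suc (2 * Kb n)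
     \<and> (\<exists>P. computes P (\<lambda>x y. pred_eca 184 n (x@y)) {x. length x = i} {y. length y = 2*n+1-i})"
proof (rule cc_le_tree)
  define C where "C = 4*n+4"
  define e where "e x = nat (alpha n i 0 x) * (C+1) + nat (alpha n i 1 x)" for x
  define h where "h v y = (min (int (v div (C+1)) + G y 0) (beta n i 0 y)
      - min (int (v mod (C+1)) + G y 0) (beta n i 1 y) = 1)" for v y
  have b0: "0 \<le> alpha n i q x \<and> alpha n i q x \<le> int C" for q x
    using alpha_bounds unfolding C_def by blast
  have lt: "nat (alpha n i 1 x) < C+1" for x using b0[of 1 x] by auto
  have dv: "e x div (C+1) = nat (alpha n i 0 x)" "e x mod (C+1) = nat (alpha n i 1 x)" for x
    unfolding e_def using divmod_aux[OF lt[of x], of "nat (alpha n i 0 x)"] by blast+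
  have "e x \<le> C * (C+1) + C" for x
  proof -
    have "nat (alpha n i 0 x) \<le> C" "nat (alpha n i 1 x) \<le> C" using b0[of 0 x] b0[of 1 x] by auto
    then have "nat (alpha n i 0 x) * (C+1) \<le> C * (C+1)" by (intro mult_right_mono) auto
    then show ?thesis unfolding e_def using \<open>nat (alpha n i 1 x) \<le> C\<close> by linarith
  qed
  moreover have "C * (C+1) + C < (C+1)^2" by (simp add: power2_eq_square algebra_simps)
  moreover have "(C+1)^2 \<le> (2 ^ Kb n)^2" using Kb_bound[of n] unfolding C_def
    by (intro power_mono) auto
  moreover have "((2::nat) ^ Kb n) ^ 2 = 2 ^ (2 * Kb n)" by (metis power_mult mult.commute)
  ultimately have "e x < 2 ^ (2 * Kb n)" for x by (metis le_less_trans less_le_trans)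
  then show "\<forall>x\<in>{x. length x = i}. e x < 2 ^ (2 * Kb n)" by blast
  show "\<forall>x\<in>{x. length x = i}. \<forall>y\<in>{y. length y = 2*n+1-i}.
      pred_eca 184 n (x@y) = h (e x) y"
  proof (intro ballI)
    fix x y :: "bool list" assume x: "x \<in> {x. length x = i}" and y: "y \<in> {y. length y = 2*n+1-i}"
    have lw: "length (x@y) = 2*n+1" using x y i by simp
    have "pred_eca 184 n (x@y) = (M n (x@y) 0 - M n (x@y) 1 = 1)" by (rule pred_formula[OF lw])
    also have "\<dots> = h (e x) y"
      unfolding h_def dv using decomp[of x i n y 0] decomp[of x i n y 1] x y i b0[of 0 x] b0[of 1 x]
      by simp
    finally show "pred_eca 184 n (x@y) = h (e x) y" .
  qed
qed



lemma fool:
  fixes P :: "('x,'y,bool) protocol" and xs :: "nat \<Rightarrow> 'x" and ys :: "nat \<Rightarrow> 'y"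
  shows "computes P g X Y \<Longrightarrow> finite J \<Longrightarrow> (\<forall>j\<in>J. xs j \<in> X \<and> ys j \<in> Y \<and> g (xs j) (ys j)) \<Longrightarrow>
    (\<forall>j\<in>J. \<forall>j'\<in>J. j < j' \<longrightarrow> \<not> g (xs j) (ys j')) \<Longrightarrow> card J \<le> 2 ^ depth P"
proof (induction P arbitrary: X Y J)
  case (Leaf z)
  have "card J \<le> Suc 0"
    unfolding card_le_Suc0_iff_eq[OF Leaf.prems(2)]
  proof (intro ballI, rule ccontr)
    fix a b assume ab: "a \<in> J" "b \<in> J" "a \<noteq> b"
    have *: False if "a' \<in> J" "b' \<in> J" "a' < b'" for a' b'
    proof -
      have "run_protocol (Leaf z) (xs a') (ys a') = g (xs a') (ys a')"
        using Leaf.prems(1,3) that unfolding computes_def by blast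
      moreover have "run_protocol (Leaf z) (xs a') (ys b') = g (xs a') (ys b')"
        using Leaf.prems(1,3) that unfolding computes_def by blast
      ultimately show False using Leaf.prems(3,4) that by auto
    qed
    show False using ab *[of a b] *[of b a] by (meson linorder_neq_iff)
  qed
  then show ?case by simp
next
  case (NodeA f l r)
  let ?J1 = "{j\<in>J. f (xs j)}" and ?J2 = "{j\<in>J. \<not> f (xs j)}"
  have cr: "computes r g {x\<in>X. f x} Y" using NodeA.prems(1) unfolding computes_def by auto
  have cl: "computes l g {x\<in>X. \<not> f x} Y" using NodeA.prems(1) unfolding computes_def by auto
  have c1: "card ?J1 \<le> 2 ^ depth r"
    by (rule NodeA.IH(2)[OF cr]) (use NodeA.prems in auto)
  have c2: "card ?J2 \<le> 2 ^ depth l"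
    by (rule NodeA.IH(1)[OF cl]) (use NodeA.prems in auto)
  have "J = ?J1 \<union> ?J2" by auto
  then have "card J = card ?J1 + card ?J2" using NodeA.prems(2)
    by (metis (no_types, lifting) card_Un_disjoint disjoint_iff finite_Un mem_Collect_eq)
  moreover have "(2::nat) ^ depth r \<le> 2 ^ max (depth l) (depth r)" by (intro power_increasing) auto
  moreover have "(2::nat) ^ depth l \<le> 2 ^ max (depth l) (depth r)" by (intro power_increasing) auto
  ultimately have "card J \<le> 2 * 2 ^ max (depth l) (depth r)" using c1 c2 by linarith
  then show ?case by simp
next
  case (NodeB f l r)
  let ?J1 = "{j\<in>J. f (ys j)}" and ?J2 = "{j\<in>J. \<not> f (ys j)}"
  have cr: "computes r g X {y\<in>Y. f y}" using NodeB.prems(1) unfolding computes_def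
    by (metis (mono_tags, lifting) mem_Collect_eq run_protocol.simps(3))
  have cl: "computes l g X {y\<in>Y. \<not> f y}" using NodeB.prems(1) unfolding computes_def
    by (metis (mono_tags, lifting) mem_Collect_eq run_protocol.simps(3))
  have c1: "card ?J1 \<le> 2 ^ depth r"
    by (rule NodeB.IH(2)[OF cr]) (use NodeB.prems in auto)
  have c2: "card ?J2 \<le> 2 ^ depth l"
    by (rule NodeB.IH(1)[OF cl]) (use NodeB.prems in auto)
  have "J = ?J1 \<union> ?J2" by auto
  then have "card J = card ?J1 + card ?J2" using NodeB.prems(2)
    by (metis (no_types, lifting) card_Un_disjoint disjoint_iff finite_Un mem_Collect_eq)
  moreover have "(2::nat) ^ depth r \<le> 2 ^ max (depth l) (depth r)" by (intro power_increasing) auto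
  moreover have "(2::nat) ^ depth l \<le> 2 ^ max (depth l) (depth r)" by (intro power_increasing) auto
  ultimately have "card J \<le> 2 * 2 ^ max (depth l) (depth r)" using c1 c2 by linarith
  then show ?case by simp
qed

lemma G_repF: "G (replicate s False) p = 0"
  unfolding G_def by (rule sum.neutral) simp

lemma G_repT: "G (replicate r True) p = int (r - p)"
proof -
  have "G (replicate r True) p = (\<Sum>j\<in>{p..<r}. 1)"
    unfolding G_def by (rule sum.cong) auto
  then show ?thesis by simp
qed

lemma G_block: "G (replicate s False @ replicate r True @ replicate u False) p =
   (if p \<le> s then int r else if p \<le> s+r then int (s+r-p) else 0)"
  by (auto simp: G_append G_repF G_repT)

lemma M_eq: "(\<forall>k\<le>t. v \<le> G w (q+2*k) + int k) \<Longrightarrow> kk \<le> t \<Longrightarrow> G w (q+2*kk) + int kk = v \<Longrightarrow> M t w q = v"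
  using M_le[of kk t w q] M_attained[of t w q] by force

definition xs :: "nat \<Rightarrow> nat \<Rightarrow> bool list" where
  "xs n j = replicate (n-j) False @ replicate j True"
definition ys :: "nat \<Rightarrow> nat \<Rightarrow> bool list" where
  "ys n j = replicate (n+1-2*j) True @ replicate (2*j) False"

lemma family:
  assumes a: "1 \<le> a" "2*a \<le> n" and b: "1 \<le> b" "2*b \<le> n"
  shows "pred_eca 184 n (xs n a @ ys n b) = (b \<le> a)"
proof -
  define w where "w = replicate (n-a) False @ replicate (a + (n+1-2*b)) True @ replicate (2*b) False"
  have weq: "xs n a @ ys n b = w" unfolding w_def xs_def ys_def by (simp add: replicate_add)
  have lw: "length w = 2*n+1" unfolding w_def using a b by simp
  have Gw: "G w p = (if p \<le> n-a then int (a + (n+1-2*b)) else if p \<le> 2*n+1-2*b then int (2*n+1-2*b-p) else 0)" for p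
    unfolding w_def G_block using a b by auto
  show ?thesis
  proof (cases "b \<le> a")
    case True
    have m0: "M n w 0 = int (n-b+1)"
      by (rule M_eq[where kk="n-b+1"]) (use a b True in \<open>auto simp: Gw\<close>)
    have m1: "M n w 1 = int (n-b)"
      by (rule M_eq[where kk="n-b"]) (use a b True in \<open>auto simp: Gw\<close>)
    show ?thesis using True m0 m1 pred_formula[OF lw] weq b by simp
  next
    case False
    have m0: "M n w 0 = int (a + (n+1-2*b))"
      by (rule M_eq[where kk="0"]) (use a b False in \<open>auto simp: Gw\<close>)
    have m1: "M n w 1 = int (a + (n+1-2*b))"
      by (rule M_eq[where kk="0"]) (use a b False in \<open>auto simp: Gw\<close>)
    show ?thesis using False m0 m1 pred_formula[OF lw] weq by simp
  qed
qed



lemma log_le_aux: "0 < x \<Longrightarrow> x \<le> (2::real) ^ c \<Longrightarrow> log 2 x \<le> real c"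
proof -
  assume a: "0 < x" "x \<le> (2::real) ^ c"
  have "log 2 x \<le> log 2 (2 ^ c)" using a by (subst log_le_cancel_iff) auto
  also have "log 2 ((2::real) ^ c) = real c" by (simp add: log_nat_power)
  finally show ?thesis .
qed

lemma cc_word_upper: "cc_word (pred_eca 184 n) (2*n+1) \<le> Suc (2 * Kb n)"
  unfolding cc_word_def using cc_split_upper[of _ n] by (subst Max_le_iff) auto

lemma cc_word_lower:
  assumes n: "4 \<le> n"
  shows "log 2 (real (n div 2)) \<le> real (cc_word (pred_eca 184 n) (2*n+1))"
proof -
  define g where "g = (\<lambda>x y. pred_eca 184 n (x@y))"
  define X where "X = {x::bool list. length x = n}"
  define Y where "Y = {y::bool list. length y = 2*n+1-n}"
  have ex: "\<exists>P. computes P g X Y" using cc_split_upper[of n n] unfolding g_def X_def Y_def by auto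
  then obtain P where P: "computes P g X Y" "depth P = cc g X Y"
    unfolding cc_def using LeastI_ex[of "\<lambda>d. \<exists>P. computes P g X Y \<and> depth P = d"] by blast
  have "card {1..n div 2} \<le> 2 ^ depth P"
  proof (rule fool[OF P(1), where xs="xs n" and ys="ys n"])
    show "finite {1..n div 2}" by simp
    show "\<forall>j\<in>{1..n div 2}. xs n j \<in> X \<and> ys n j \<in> Y \<and> g (xs n j) (ys n j)"
      unfolding X_def Y_def g_def using family by (auto simp: xs_def ys_def)
    show "\<forall>j\<in>{1..n div 2}. \<forall>j'\<in>{1..n div 2}. j < j' \<longrightarrow> \<not> g (xs n j) (ys n j')"
      unfolding g_def using family by auto
  qed
  then have c: "real (n div 2) \<le> 2 ^ cc g X Y" using P(2)
    by (metis card_atLeastAtMost diff_Suc_1 of_nat_le_iff of_nat_numeral of_nat_power)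
  have "cc g X Y \<le> cc_word (pred_eca 184 n) (2*n+1)"
    unfolding cc_word_def g_def X_def Y_def by (rule Max_ge) (simp, rule image_eqI[of _ _ n], auto)
  moreover have "log 2 (real (n div 2)) \<le> real (cc g X Y)"
  proof -
    have "0 < real (n div 2)" using n by simp
    then show ?thesis using c by (rule log_le_aux)
  qed
  ultimately show ?thesis by linarith
qed

theorem mainTheorem19:
  shows "(\<lambda>n::nat. real (cc_word (pred_eca 184 n) (2 * n + 1))) \<in> \<Theta>(\<lambda>n. ln (real n))"
proof (rule bigthetaI)
  let ?f = "\<lambda>n::nat. real (cc_word (pred_eca 184 n) (2 * n + 1))"
  have up: "?f n \<le> 2*(log 2 (4*real n+5)+1)+1" for n
  proof -
    have "real (Kb n) \<le> log 2 (4*real n+5) + 1"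
    proof -
      have "0 \<le> log 2 (4*real n+5)" by simp
      then have "real (Kb n) = real_of_int \<lceil>log 2 (real (4*n+5))\<rceil>" unfolding Kb_def by simp
      also have "\<dots> \<le> log 2 (real (4*n+5)) + 1" by linarith
      finally show ?thesis by simp
    qed
    then have k: "2 * real (Kb n) + 1 \<le> 2*(log 2 (4*real n+5)+1)+1" by simp
    have f1: "?f n \<le> real (Suc (2 * Kb n))" using cc_word_upper[of n] by (simp only: of_nat_le_iff)
    have eq: "real (Suc (2 * Kb n)) = 2 * real (Kb n) + 1" by simp
    show ?thesis using order_trans[OF f1[unfolded eq] k] .
  qed
  have "?f \<in> O(\<lambda>n. 2*(log 2 (4*real n+5)+1)+1)"
  proof (rule bigoI[where c=1])
    show "\<forall>\<^sub>F n in at_top. norm (?f n) \<le> 1 * norm (2*(log 2 (4*real n+5)+1)+1)"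
    proof (rule always_eventually, rule allI)
      fix n :: nat
      have "0 \<le> log 2 (4*real n+5)" by simp
      then show "norm (?f n) \<le> 1 * norm (2*(log 2 (4*real n+5)+1)+1)" using up[of n] by simp
    qed
  qed
  moreover have "(\<lambda>n::nat. 2*(log 2 (4*real n+5)+1)+1) \<in> O(\<lambda>n. ln (real n))" by real_asymp
  ultimately show "?f \<in> O(\<lambda>n. ln (real n))" by (rule landau_o.big_trans)
  have "(\<lambda>n::nat. log 2 ((real n - 1)/2)) \<in> O(?f)"
  proof (rule bigoI[where c=1])
    show "\<forall>\<^sub>F n in at_top. norm (log 2 ((real n - 1)/2)) \<le> 1 * norm (?f n)"
      unfolding eventually_at_top_linorder
    proof (intro exI[of _ 4] allI impI)
      fix n :: nat assume n: "4 \<le> n"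
      have a: "1 \<le> (real n - 1)/2" using n by simp
      have nn: "n \<le> 2*(n div 2)+1" by presburger
      have "real n \<le> 2*real (n div 2) + 1" using of_nat_mono[OF nn] by simp
      moreover have "\<And>(u::real) v. u \<le> 2*v+1 \<Longrightarrow> (u-1)/2 \<le> v" by (simp add: field_simps)
      ultimately have b: "(real n - 1)/2 \<le> real (n div 2)" by blast
      have "0 \<le> log 2 ((real n - 1)/2)" using a by simp
      moreover have "log 2 ((real n - 1)/2) \<le> log 2 (real (n div 2))" using a b by simp
      ultimately show "norm (log 2 ((real n - 1)/2)) \<le> 1 * norm (?f n)"
        using cc_word_lower[OF n] by simp
    qed
  qed
  moreover have "(\<lambda>n::nat. ln (real n)) \<in> O(\<lambda>n. log 2 ((real n - 1)/2))" by real_asymp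
  ultimately have "(\<lambda>n::nat. ln (real n)) \<in> O(?f)" by (metis landau_o.big_trans)
  then show "?f \<in> \<Omega>(\<lambda>n. ln (real n))" by (simp add: bigomega_iff_bigo)
qed

end
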